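(* Let $d\ge1$. For integers $0\le m\le n$, $0\le j\le m/2$ and $1\le\ell\le\dim\mathcal H_{m-2j}^d$, $$Q_{m,j,\ell}^{n,-1} = a_{m,j}\Big[\big(Q_{m,j,\ell}^{n,0}-b_{m,n}Q_{m-2,j-1,\ell}^{n,0}\big) - 2\big(Q_{m,j,\ell}^{n-1,0}-c_{m,n}Q_{m-2,j-1,\ell}^{n-1,0}\big) + \big(Q_{m,j,\ell}^{n-2,0}-d_{m,n}Q_{m-2,j-1,\ell}^{n-2,0}\big)\Big],$$ where $a_{m,j}=\frac{2m-2j+d-2}{2m+d-2}$ (with $a_{0,0}=1$ when $d=2$), $b_{m,n}=(n-m+1)(n-m+2)$, $c_{m,n}=(n+m+d-2)(n-m+1)$ and $d_{m,n}=(n+m+d-2)(n+m+d-3)$.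
   Context: For real $\alpha$ define $L_n^{\alpha}(t)=\sum_{k=0}^n \frac{(\alpha+k+1)_{n-k}}{(n-k)!}\frac{(-t)^k}{k!}$, and for real $\alpha,\beta$ define $P_n^{(\alpha,\beta)}(s)=\sum_{k=0}^n \frac{(\alpha+k+1)_{n-k}(n+\alpha+\beta+1)_k}{k!\,(n-k)!}\left(\frac{s-1}{2}\right)^k$ (classical Laguerre and Jacobi polynomials, extended polynomially in the parameters); $(a)_k$ is the Pochhammer symbol. For an integer $p\ge0$, $\mathcal H_p^d$ is the space of homogeneous harmonic polynomials of degree $p$ in $d$ variables (for $d=1$: $\mathcal H_0^1=\mathrm{span}\{1\}$, $\mathcal H_1^1=\mathrm{span}\{x\}$, $\mathcal H_p^1=\{0\}$ for $p\ge2$), and $\{Y_\ell^p\}$ is an orthonormal basis of it with respect to the normalized surface measure on the unit sphere $\mathbb S^{d-1}$. For $\mu\ge-1$ and integers $0\le m\le n$, $0\le j\le m/2$, $1\le \ell\le \dim\mathcal H^d_{m-2j}$, $$Q_{m,j,\ell}^{n,\mu}(x,t)=L_{n-m}^{2m+2\mu+d}(t)\,t^{2j}\,P_j^{(\mu,\,m-2j+\frac{d-2}{2})}\!\left(2\frac{\|x\|^2}{t^2}-1\right)Y_\ell^{m-2j}(x),\qquad x\in\mathbb R^d,\ t\in\mathbb R.$$ Convention: $Q_{m',j',\ell}^{n',\mu}:=0$ whenever $m'<0$, $j'<0$, or $n'<m'$. *)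

theory Defs
  imports "HOL-Analysis.Analysis"
begin

definition laguerre :: "nat \<Rightarrow> real \<Rightarrow> real \<Rightarrow> real" where
  "laguerre n \<alpha> t = (\<Sum>k\<le>n. pochhammer (\<alpha> + real k + 1) (n - k) / fact (n - k) * (-t) ^ k / fact k)"

definition jacobi :: "nat \<Rightarrow> real \<Rightarrow> real \<Rightarrow> real \<Rightarrow> real" where
  "jacobi n \<alpha> \<beta> s = (\<Sum>k\<le>n. pochhammer (\<alpha> + real k + 1) (n - k) * pochhammer (real n + \<alpha> + \<beta> + 1) k
        / (fact k * fact (n - k)) * ((s - 1) / 2) ^ k)"

text \<open>The polynomial t^(2j) P_j^(a,b)(2|x|^2/t^2 - 1), written as the polynomial in (x,t) it is:
  since t^2 ((s-1)/2) = |x|^2 - t^2 for s = 2|x|^2/t^2 - 1, each term t^(2j) ((s-1)/2)^k equals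
  (|x|^2 - t^2)^k t^(2(j-k)).  For t \<noteq> 0 this coincides with the literal formula.\<close>
definition hom_jacobi :: "nat \<Rightarrow> real \<Rightarrow> real \<Rightarrow> 'a::real_normed_vector \<Rightarrow> real \<Rightarrow> real" where
  "hom_jacobi n \<alpha> \<beta> x t = (\<Sum>k\<le>n. pochhammer (\<alpha> + real k + 1) (n - k) * pochhammer (real n + \<alpha> + \<beta> + 1) k
        / (fact k * fact (n - k)) * ((norm x)\<^sup>2 - t\<^sup>2) ^ k * t ^ (2 * (n - k)))"

definition harmonic_hom :: "nat \<Rightarrow> (real ^ 'd \<Rightarrow> real) \<Rightarrow> bool" where
  "harmonic_hom p Y \<longleftrightarrow>
     (\<exists>c :: ('d \<Rightarrow> nat) \<Rightarrow> real. \<forall>x. Y x = (\<Sum>\<alpha> \<in> {\<alpha>. (\<Sum>i\<in>UNIV. \<alpha> i) = p}. c \<alpha> * (\<Prod>i\<in>UNIV. (x $ i) ^ (\<alpha> i))))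
   \<and> (\<forall>x. (\<Sum>i\<in>UNIV. deriv (\<lambda>s. deriv (\<lambda>r. Y (x + r *\<^sub>R axis i 1)) s) 0) = 0)"

text \<open>Q^{n,mu}_{m,j} with harmonic factor Y (playing the role of Y_l^{m-2j}); zero by convention
  when m < 0, j < 0 or n < m.\<close>
definition Qpoly :: "real \<Rightarrow> int \<Rightarrow> int \<Rightarrow> int \<Rightarrow> (real ^ 'd \<Rightarrow> real) \<Rightarrow> real ^ 'd \<Rightarrow> real \<Rightarrow> real" where
  "Qpoly \<mu> n m j Y x t =
     (if m < 0 \<or> j < 0 \<or> n < m then 0
      else laguerre (nat (n - m)) (2 * of_int m + 2 * \<mu> + real CARD('d)) t
           * hom_jacobi (nat j) \<mu> (of_int m - 2 * of_int j + (real CARD('d) - 2) / 2) x t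
           * Y x)"

definition coef_a :: "nat \<Rightarrow> int \<Rightarrow> int \<Rightarrow> real" where
  "coef_a d m j = (if d = 2 \<and> m = 0 then 1
     else (2 * of_int m - 2 * of_int j + real d - 2) / (2 * of_int m + real d - 2))"

end

theory Submission imports Defs begin

definition lc :: "nat \<Rightarrow> real \<Rightarrow> nat \<Rightarrow> real" where
  "lc n a i = (if i \<le> n then pochhammer (a + real i + 1) (n - i) / fact (n - i) * (-1)^i / fact i else 0)"

lemma lag_lc: assumes "n \<le> N" shows "laguerre n a t = (\<Sum>i\<le>N. lc n a i * t^i)"
proof -
  have "laguerre n a t = (\<Sum>i\<le>n. lc n a i * t^i)"
    unfolding laguerre_def lc_def
    by (rule sum.cong) (auto simp: power_minus[of t])
  also have "\<dots> = (\<Sum>i\<le>N. lc n a i * t^i)"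
    by (rule sum.mono_neutral_left) (use assms in \<open>auto simp: lc_def\<close>)
  finally show ?thesis .
qed

lemma lc_P: "lc (Suc n) (a - 1) i = lc (Suc n) a i - lc n a i"
proof (cases "i \<le> n")
  case True
  then obtain m where m: "n - i = m" "Suc n - i = Suc m" by (simp add: Suc_diff_le)
  have p1: "pochhammer (a - 1 + real i + 1) (Suc m) = (a + real i) * pochhammer (a + real i + 1) m"
    by (simp add: pochhammer_rec add_ac)
  have p2: "pochhammer (a + real i + 1) (Suc m) = (a + real i + 1 + real m) * pochhammer (a + real i + 1) m"
    by (simp add: pochhammer_rec')
  define P where "P = pochhammer (a + real i + 1) m"
  have l1: "lc (Suc n) (a - 1) i = (a + real i) * P / ((real m + 1) * fact m) * (-1)^i / fact i"
    using True unfolding lc_def P_def by (simp only: m p1 if_True le_SucI fact_Suc) (simp add: algebra_simps)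
  have l2: "lc (Suc n) a i = (a + real i + 1 + real m) * P / ((real m + 1) * fact m) * (-1)^i / fact i"
    using True unfolding lc_def P_def by (simp only: m p2 if_True le_SucI fact_Suc) (simp add: algebra_simps)
  have l3: "lc n a i = P / fact m * (-1)^i / fact i"
    using True unfolding lc_def P_def by (simp only: m if_True)
  have f: "fact m > (0::real)" "fact i > (0::real)" "real m + 1 > 0" by auto
  show ?thesis unfolding l1 l2 l3 using f
    by (simp add: divide_simps) (simp add: algebra_simps)
next
  case False
  then show ?thesis by (cases "i = Suc n") (auto simp: lc_def)
qed

lemma lag_P: "laguerre (Suc n) (a - 1) t = laguerre (Suc n) a t - laguerre n a t"
proof -
  have "laguerre (Suc n) (a - 1) t = (\<Sum>i\<le>Suc n. lc (Suc n) (a - 1) i * t^i)" by (rule lag_lc) simp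
  also have "\<dots> = (\<Sum>i\<le>Suc n. lc (Suc n) a i * t^i - lc n a i * t^i)"
    by (rule sum.cong) (simp_all only: lc_P left_diff_distrib)
  also have "\<dots> = (\<Sum>i\<le>Suc n. lc (Suc n) a i * t^i) - (\<Sum>i\<le>Suc n. lc n a i * t^i)"
    by (rule sum_subtractf)
  also have "\<dots> = laguerre (Suc n) a t - laguerre n a t"
    using lag_lc[of "Suc n" "Suc n" a t] lag_lc[of n "Suc n" a t] by simp
  finally show ?thesis .
qed

lemma lc_R: "(if i = 0 then 0 else lc k (g + 1) (i - 1)) =
   (real k + g + 1) * lc k g i - (real k + 1) * lc (Suc k) g i"
proof (cases i)
  case 0
  define P where "P = pochhammer (g + 1) k"
  have p2: "pochhammer (g + 0 + 1) (Suc k) = (g + 1 + real k) * P"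
    unfolding P_def by (simp add: pochhammer_rec')
  have l1: "lc k g 0 = P / fact k" unfolding lc_def P_def by simp
  have l2: "lc (Suc k) g 0 = (g + 1 + real k) * P / ((real k + 1) * fact k)"
    unfolding lc_def by (simp only: p2 fact_Suc diff_zero of_nat_0 le0 if_True) simp
  have f: "fact k > (0::real)" "real k + 1 > 0" by auto
  show ?thesis unfolding 0 l1 l2 using f by (simp add: divide_simps)
next
  case (Suc j)
  show ?thesis
  proof (cases "j < k")
    case True
    then obtain m where k: "k = Suc (j + m)" by (auto simp: less_iff_Suc_add)
    have m: "k - j = Suc m" "k - Suc j = m" "Suc k - Suc j = Suc m" using k by auto
    have km: "real k = real m + real j + 1" using k by simp
    define b where "b = g + real (Suc j) + 1"
    define Q where "Q = pochhammer b m"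
    have pb: "pochhammer b (Suc m) = (real k + g + 1) * Q"
      unfolding Q_def by (simp add: pochhammer_rec' b_def km)
    have e1: "g + 1 + real j + 1 = b" by (simp add: b_def)
    have l0: "lc k (g + 1) j = (real k + g + 1) * Q / ((real m + 1) * fact m) * (-1)^j / fact j"
      using True unfolding lc_def by (simp only: e1 m pb fact_Suc if_True less_imp_le) (simp add: algebra_simps)
    have l1: "lc k g (Suc j) = Q / fact m * (- ((-1)^j)) / ((real j + 1) * fact j)"
      using True unfolding lc_def Q_def b_def[symmetric] by (simp only: m fact_Suc if_True Suc_leI) (simp add: algebra_simps)
    have l2: "lc (Suc k) g (Suc j) = (real k + g + 1) * Q / ((real m + 1) * fact m) * (- ((-1)^j)) / ((real j + 1) * fact j)"
      using True unfolding lc_def b_def[symmetric] by (simp only: m pb fact_Suc if_True Suc_leI le_SucI) (simp add: algebra_simps)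
    have f: "fact m > (0::real)" "fact j > (0::real)" "real m + 1 > 0" "real j + 1 > 0" by auto
    have i: "(if i = 0 then 0 else lc k (g + 1) (i - 1)) = lc k (g + 1) j" using Suc by simp
    show ?thesis unfolding i unfolding Suc l0 l1 l2 using f
      by (simp add: divide_simps) (simp add: algebra_simps km)
  next
    case False
    show ?thesis
    proof (cases "j = k")
      case True
      have f: "fact k > (0::real)" "real k + 1 > 0" by auto
      show ?thesis using Suc True f by (simp add: lc_def divide_simps)
    next
      case False
      then show ?thesis using Suc \<open>\<not> j < k\<close> by (simp add: lc_def)
    qed
  qed
qed

lemma lag_R: "t * laguerre k (g + 1) t = (real k + g + 1) * laguerre k g t - (real k + 1) * laguerre (Suc k) g t"
proof -
  have "t * laguerre k (g + 1) t = (\<Sum>i\<le>k. lc k (g + 1) i * t ^ Suc i)"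
    by (simp add: lag_lc[of k k] sum_distrib_left algebra_simps)
  also have "\<dots> = (\<Sum>i\<le>Suc k. (if i = 0 then 0 else lc k (g + 1) (i - 1)) * t ^ i)"
    by (subst sum.atMost_Suc_shift) simp
  also have "\<dots> = (\<Sum>i\<le>Suc k. (real k + g + 1) * (lc k g i * t ^ i) - (real k + 1) * (lc (Suc k) g i * t ^ i))"
    by (rule sum.cong) (simp_all only: lc_R left_diff_distrib mult.assoc)
  also have "\<dots> = (real k + g + 1) * (\<Sum>i\<le>Suc k. lc k g i * t ^ i) - (real k + 1) * (\<Sum>i\<le>Suc k. lc (Suc k) g i * t ^ i)"
    by (simp only: sum_subtractf sum_distrib_left)
  also have "\<dots> = (real k + g + 1) * laguerre k g t - (real k + 1) * laguerre (Suc k) g t"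
    using lag_lc[of k "Suc k" g t] lag_lc[of "Suc k" "Suc k" g t] by simp
  finally show ?thesis .
qed

lemma lag_2: "t^2 * laguerre k (g + 2) t = (real k + g + 2) * (real k + g + 1) * laguerre k g t
   - 2 * (real k + 1) * (real k + g + 2) * laguerre (Suc k) g t
   + (real k + 1) * (real k + 2) * laguerre (Suc (Suc k)) g t"
proof -
  have e: "g + 2 = (g + 1) + 1" by simp
  have r1: "t * laguerre k (g + 2) t = (real k + g + 2) * laguerre k (g + 1) t - (real k + 1) * laguerre (Suc k) (g + 1) t"
    unfolding e lag_R by (simp add: algebra_simps)
  have r2: "t * laguerre k (g + 1) t = (real k + g + 1) * laguerre k g t - (real k + 1) * laguerre (Suc k) g t"
    by (rule lag_R)
  have r3: "t * laguerre (Suc k) (g + 1) t = (real k + g + 2) * laguerre (Suc k) g t - (real k + 2) * laguerre (Suc (Suc k)) g t"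
    using lag_R[of t "Suc k" g] by (simp add: algebra_simps)
  have A0: "t^2 * laguerre k (g + 2) t = t * (t * laguerre k (g + 2) t)" by (simp add: power2_eq_square)
  have A: "t^2 * laguerre k (g + 2) t = (real k + g + 2) * (t * laguerre k (g + 1) t) - (real k + 1) * (t * laguerre (Suc k) (g + 1) t)"
    unfolding A0 r1 by (simp add: algebra_simps)
  show ?thesis unfolding A r2 r3 by (simp add: algebra_simps)
qed

definition li :: "int \<Rightarrow> real \<Rightarrow> real \<Rightarrow> real" where
  "li K a t = (if K < 0 then 0 else laguerre (nat K) a t)"

lemma li_P: "li K (a - 1) t = li K a t - li (K - 1) a t"
proof (cases "K < 0")
  case True then show ?thesis by (simp add: li_def)
next
  case False
  show ?thesis
  proof (cases "K = 0")
    case True then show ?thesis by (simp add: li_def laguerre_def)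
  next
    case False
    obtain n0 where n0: "K = int n0" using \<open>\<not> K < 0\<close> nonneg_int_cases by (metis linorder_not_less)
    then obtain n where n: "K = int (Suc n)" using False by (cases n0) auto
    have k1: "nat K = Suc n" "nat (K - 1) = n" "\<not> K < 0" "\<not> K - 1 < 0" using n by auto
    show ?thesis using lag_P[of n a t] by (simp only: li_def k1 if_False)
  qed
qed

lemma li_P2: "li K (a - 2) t = li K a t - 2 * li (K - 1) a t + li (K - 2) a t"
proof -
  have e: "a - 2 = (a - 1) - 1" by simp
  show ?thesis unfolding e li_P[of K "a - 1"] li_P[of "K - 1" "a - 1"] li_P[of K a] li_P[of "K - 1" a]
    by (simp add: algebra_simps)
qed

definition jc :: "nat \<Rightarrow> real \<Rightarrow> real \<Rightarrow> nat \<Rightarrow> real" where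
  "jc n \<mu> \<beta> k = pochhammer (\<mu> + real k + 1) (n - k) * pochhammer (real n + \<mu> + \<beta> + 1) k / (fact k * fact (n - k))"

lemma hj_jc: "hom_jacobi n \<mu> \<beta> x t = (\<Sum>k\<le>n. jc n \<mu> \<beta> k * ((norm x)^2 - t^2)^k * t^(2*(n-k)))"
  by (simp add: hom_jacobi_def jc_def)

lemma poch_fact: "pochhammer (real a + 1) r * fact a = (fact (a + r) :: real)"
proof (induction r)
  case 0 then show ?case by simp
next
  case (Suc r)
  have "pochhammer (real a + 1) (Suc r) * fact a = (real a + 1 + real r) * (pochhammer (real a + 1) r * fact a)"
    by (simp add: pochhammer_rec')
  also have "\<dots> = fact (a + Suc r)" using Suc by (simp add: algebra_simps)
  finally show ?case .
qed

lemma jc_id: assumes "k \<le> Suc p" and A: "A = real (Suc p) + \<beta>"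
  shows "(real (Suc p) + A) * jc (Suc p) (-1) \<beta> k = A * (jc (Suc p) 0 \<beta> k - (if k \<le> p then jc p 0 \<beta> k else 0))"
proof (cases k)
  case 0
  have "jc (Suc p) (-1) \<beta> 0 = 0" by (simp add: jc_def pochhammer_0_left)
  moreover have "jc (Suc p) 0 \<beta> 0 = 1" "jc p 0 \<beta> 0 = 1"
    by (simp_all add: jc_def pochhammer_fact[symmetric])
  ultimately show ?thesis using 0 by simp
next
  case (Suc q)
  note kq = this
  then obtain r where p: "p = q + r" using assms(1) by (metis Suc_le_mono le_iff_add)
  define W where "W = pochhammer (A + 1) q"
  have fq: "fact q > (0::real)" "fact r > (0::real)" "real q + 1 > 0" by auto
  have x1: "pochhammer (- 1 + real (Suc q) + 1) (Suc p - Suc q) = fact p / fact q"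
    using poch_fact[of q r] fq p by (simp add: field_simps)
  have x2: "pochhammer (real (Suc p) + - 1 + \<beta> + 1) (Suc q) = A * W"
    unfolding W_def A by (simp add: pochhammer_rec algebra_simps)
  have t1: "jc (Suc p) (-1) \<beta> (Suc q) = fact p / fact q * (A * W) / ((real q + 1) * fact q * fact r)"
    unfolding jc_def x1 x2 using p by simp
  have x3: "pochhammer (0 + real (Suc q) + 1) (Suc p - Suc q) = (real p + 1) * fact p / ((real q + 1) * fact q)"
  proof -
    have nz: "(real q + 1) * fact q \<noteq> (0::real)" using fq by simp
    have "pochhammer (0 + real (Suc q) + 1) (Suc p - Suc q) * ((real q + 1) * fact q) = (real p + 1) * fact p"
      using poch_fact[of "Suc q" r] p by (simp add: algebra_simps)
    then show ?thesis using nz by (simp add: eq_divide_eq)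
  qed
  have x4: "pochhammer (real (Suc p) + 0 + \<beta> + 1) (Suc q) = (A + 1 + real q) * W"
    unfolding W_def A by (simp add: pochhammer_rec' algebra_simps)
  have t2: "jc (Suc p) 0 \<beta> (Suc q) = (real p + 1) * fact p / ((real q + 1) * fact q) * ((A + 1 + real q) * W) / ((real q + 1) * fact q * fact r)"
    unfolding jc_def x3 x4 using p by simp
  show ?thesis
  proof (cases r)
    case 0
    then have "(if k \<le> p then jc p 0 \<beta> k else 0) = 0" using kq p by simp
    then show ?thesis unfolding kq t1 t2 using fq 0 p A
      by (simp add: divide_simps)
  next
    case (Suc r')
    have fr: "fact r = real r * (fact r' :: real)" "fact r' > (0::real)" using Suc by auto
    have x5: "pochhammer (0 + real (Suc q) + 1) (p - Suc q) = fact p / ((real q + 1) * fact q)"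
    proof -
      have nz: "(real q + 1) * fact q \<noteq> (0::real)" using fq by simp
      have "pochhammer (0 + real (Suc q) + 1) (p - Suc q) * ((real q + 1) * fact q) = fact p"
        using poch_fact[of "Suc q" r'] p Suc by (simp add: algebra_simps)
      then show ?thesis using nz by (simp add: eq_divide_eq)
    qed
    have x6: "pochhammer (real p + 0 + \<beta> + 1) (Suc q) = A * W"
      unfolding W_def A by (simp add: pochhammer_rec algebra_simps)
    have t3: "jc p 0 \<beta> (Suc q) = fact p / ((real q + 1) * fact q) * (A * W) / ((real q + 1) * fact q * fact r')"
      unfolding jc_def x5 x6 using p Suc by simp
    have kp: "(if k \<le> p then jc p 0 \<beta> k else 0) = jc p 0 \<beta> (Suc q)" using kq p Suc by simp
    show ?thesis unfolding kp unfolding kq t1 t2 t3 using fq fr p A Suc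
      by (simp add: divide_simps) (simp add: algebra_simps)
  qed
qed

lemma hj_shift: "t^2 * hom_jacobi p 0 \<beta> x t =
   (\<Sum>k\<le>Suc p. (if k \<le> p then jc p 0 \<beta> k else 0) * ((norm x)^2 - t^2)^k * t^(2*(Suc p - k)))"
proof -
  have "t^2 * hom_jacobi p 0 \<beta> x t = (\<Sum>k\<le>p. jc p 0 \<beta> k * ((norm x)^2 - t^2)^k * t^(2*(Suc p - k)))"
    unfolding hj_jc sum_distrib_left
  proof (rule sum.cong)
    fix k assume "k \<in> {..p}"
    then have "2 * (Suc p - k) = Suc (Suc (2 * (p - k)))" by auto
    then show "t\<^sup>2 * (jc p 0 \<beta> k * ((norm x)\<^sup>2 - t\<^sup>2) ^ k * t ^ (2 * (p - k))) =
         jc p 0 \<beta> k * ((norm x)\<^sup>2 - t\<^sup>2) ^ k * t ^ (2 * (Suc p - k))"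
      by (simp add: power2_eq_square algebra_simps)
  qed simp
  also have "\<dots> = (\<Sum>k\<le>Suc p. (if k \<le> p then jc p 0 \<beta> k else 0) * ((norm x)^2 - t^2)^k * t^(2*(Suc p - k)))"
    by (simp add: sum.atMost_Suc)
  finally show ?thesis .
qed

lemma hj_id: assumes A: "A = real (Suc p) + \<beta>"
  shows "(real (Suc p) + A) * hom_jacobi (Suc p) (-1) \<beta> x t = A * (hom_jacobi (Suc p) 0 \<beta> x t - t^2 * hom_jacobi p 0 \<beta> x t)"
proof -
  have "(real (Suc p) + A) * hom_jacobi (Suc p) (-1) \<beta> x t
     = (\<Sum>k\<le>Suc p. ((real (Suc p) + A) * jc (Suc p) (-1) \<beta> k) * ((norm x)^2 - t^2)^k * t^(2*(Suc p - k)))"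
    unfolding hj_jc sum_distrib_left by (simp add: algebra_simps)
  also have "\<dots> = (\<Sum>k\<le>Suc p. (A * (jc (Suc p) 0 \<beta> k - (if k \<le> p then jc p 0 \<beta> k else 0))) * ((norm x)^2 - t^2)^k * t^(2*(Suc p - k)))"
    by (rule sum.cong) (use jc_id[OF _ A] in auto)
  also have "\<dots> = A * ((\<Sum>k\<le>Suc p. jc (Suc p) 0 \<beta> k * ((norm x)^2 - t^2)^k * t^(2*(Suc p - k)))
      - (\<Sum>k\<le>Suc p. (if k \<le> p then jc p 0 \<beta> k else 0) * ((norm x)^2 - t^2)^k * t^(2*(Suc p - k))))"
    unfolding sum_subtractf[symmetric] sum_distrib_left by (rule sum.cong) (simp_all add: algebra_simps)
  also have "\<dots> = A * (hom_jacobi (Suc p) 0 \<beta> x t - t^2 * hom_jacobi p 0 \<beta> x t)"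
    unfolding hj_shift unfolding hj_jc ..
  finally show ?thesis .
qed

lemma Qform:
  fixes Y :: "real ^ 'd \<Rightarrow> real"
  assumes "0 \<le> m" "0 \<le> j"
  shows "Qpoly \<mu> n m j Y x t = li (n - m) (2 * of_int m + 2 * \<mu> + real CARD('d)) t
     * hom_jacobi (nat j) \<mu> (of_int m - 2 * of_int j + (real CARD('d) - 2) / 2) x t * Y x"
  using assms by (simp add: Qpoly_def li_def)

lemma li_nat: "li (int k) a t = laguerre k a t" by (simp add: li_def)

lemma hj0: "hom_jacobi 0 \<mu> \<beta> x t = 1" by (simp add: hom_jacobi_def)

theorem proposition2p2:
  fixes Y :: "real ^ 'd \<Rightarrow> real" and n m j :: int and x :: "real ^ 'd" and t :: real
  assumes "0 \<le> m" and "m \<le> n" and "0 \<le> j" and "2 * j \<le> m"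
    and "harmonic_hom (nat (m - 2 * j)) Y"
  shows "Qpoly (-1) n m j Y x t =
    coef_a CARD('d) m j *
      ((Qpoly 0 n m j Y x t - of_int ((n - m + 1) * (n - m + 2)) * Qpoly 0 n (m - 2) (j - 1) Y x t)
       - 2 * (Qpoly 0 (n - 1) m j Y x t
              - of_int ((n + m + int CARD('d) - 2) * (n - m + 1)) * Qpoly 0 (n - 1) (m - 2) (j - 1) Y x t)
       + (Qpoly 0 (n - 2) m j Y x t
              - of_int ((n + m + int CARD('d) - 2) * (n + m + int CARD('d) - 3)) * Qpoly 0 (n - 2) (m - 2) (j - 1) Y x t))"
proof -
  define D where "D = real CARD('d)"
  define \<beta> where "\<beta> = of_int m - 2 * of_int j + (D - 2) / 2"
  define \<alpha> where "\<alpha> = 2 * of_int m + D"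
  obtain k where k: "n - m = int k" using assms(2) by (metis zero_le_imp_eq_int diff_ge_0_iff_ge)
  have D1: "D \<ge> 1" unfolding D_def by simp
  define J0 where "J0 = hom_jacobi (nat j) 0 \<beta> x t"
  define Jm where "Jm = hom_jacobi (nat j) (-1) \<beta> x t"
  define L2 where "L2 = li (n - m) (\<alpha> - 2) t"
  have e1: "2 * of_int m + 2 * (-1) + real CARD('d) = \<alpha> - 2" by (simp add: \<alpha>_def D_def)
  have e0: "2 * of_int m + 2 * 0 + real CARD('d) = \<alpha>" by (simp add: \<alpha>_def D_def)
  have eb: "of_int m - 2 * of_int j + (real CARD('d) - 2) / 2 = \<beta>" by (simp add: \<beta>_def D_def)
  have LHS: "Qpoly (-1) n m j Y x t = L2 * Jm * Y x"
    using Qform[OF assms(1,3), of "-1" n Y x t] unfolding e1 eb L2_def Jm_def .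
  have Q0: "Qpoly 0 n m j Y x t = li (n - m) \<alpha> t * J0 * Y x"
    using Qform[OF assms(1,3), of 0 n Y x t] unfolding e0 eb J0_def .
  have Q1: "Qpoly 0 (n - 1) m j Y x t = li (n - m - 1) \<alpha> t * J0 * Y x"
    using Qform[OF assms(1,3), of 0 "n - 1" Y x t] unfolding e0 eb J0_def by (simp add: algebra_simps)
  have Q2: "Qpoly 0 (n - 2) m j Y x t = li (n - m - 2) \<alpha> t * J0 * Y x"
    using Qform[OF assms(1,3), of 0 "n - 2" Y x t] unfolding e0 eb J0_def by (simp add: algebra_simps)
  have G1: "li (n - m) \<alpha> t - 2 * li (n - m - 1) \<alpha> t + li (n - m - 2) \<alpha> t = L2"
    unfolding L2_def li_P2 ..
  show ?thesis
  proof (cases "j = 0")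
    case True
    have z: "Qpoly 0 n' (m - 2) (j - 1) Y x t = 0" for n' using True by (simp add: Qpoly_def)
    have a1: "coef_a CARD('d) m j = 1"
    proof -
      have "2 * of_int m + real CARD('d) - 2 \<noteq> 0 \<or> (CARD('d) = 2 \<and> m = 0)"
      proof (rule ccontr)
        assume "\<not> ?thesis"
        then have h: "2 * of_int m + real CARD('d) - 2 = 0" "\<not> (CARD('d) = 2 \<and> m = 0)" by auto
        then have "2 * m + int CARD('d) - 2 = 0" by linarith
        moreover have "0 < CARD('d)" by simp
        ultimately show False using h(2) assms(1) by presburger
      qed
      then show ?thesis
      proof (elim disjE)
        assume h: "2 * of_int m + real CARD('d) - 2 \<noteq> 0"
        have "coef_a CARD('d) m j = (2 * of_int m + real CARD('d) - 2) / (2 * of_int m + real CARD('d) - 2)"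
        proof -
          have nc: "\<not> (CARD('d) = 2 \<and> m = 0)" using h by auto
          show ?thesis unfolding coef_a_def using True nc by (simp only: if_False) simp
        qed
        then show ?thesis using h by simp
      next
        assume "CARD('d) = 2 \<and> m = 0"
        then show ?thesis by (simp add: coef_a_def)
      qed
    qed
    have "Jm = J0" using True by (simp add: Jm_def J0_def hj0)
    then have "L2 * Jm * Y x = (li (n - m) \<alpha> t - 2 * li (n - m - 1) \<alpha> t + li (n - m - 2) \<alpha> t) * J0 * Y x"
      unfolding G1 by simp
    then show ?thesis unfolding LHS Q0 Q1 Q2 z a1 by (simp add: algebra_simps)
  next
    case False
    define p where "p = nat j - 1"
    have p: "nat j = Suc p" "nat (j - 1) = p" using False assms(3) unfolding p_def by auto
    have m2: "0 \<le> m - 2" "0 \<le> j - 1" using False assms by auto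
    define J1 where "J1 = hom_jacobi p 0 \<beta> x t"
    have e4: "2 * of_int (m - 2) + 2 * 0 + real CARD('d) = \<alpha> - 4" by (simp add: \<alpha>_def D_def)
    have eb2: "of_int (m - 2) - 2 * of_int (j - 1) + (real CARD('d) - 2) / 2 = \<beta>" by (simp add: \<beta>_def D_def)
    have k0: "n - (m - 2) = int (Suc (Suc k))" "n - 1 - (m - 2) = int (Suc k)" "n - 2 - (m - 2) = int k"
      using k by auto
    have R0: "Qpoly 0 n (m - 2) (j - 1) Y x t = laguerre (Suc (Suc k)) (\<alpha> - 4) t * J1 * Y x"
      using Qform[OF m2, of 0 n Y x t] unfolding e4 eb2 k0 li_nat p J1_def .
    have R1: "Qpoly 0 (n - 1) (m - 2) (j - 1) Y x t = laguerre (Suc k) (\<alpha> - 4) t * J1 * Y x"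
      using Qform[OF m2, of 0 "n - 1" Y x t] unfolding e4 eb2 k0 li_nat p J1_def .
    have R2: "Qpoly 0 (n - 2) (m - 2) (j - 1) Y x t = laguerre k (\<alpha> - 4) t * J1 * Y x"
      using Qform[OF m2, of 0 "n - 2" Y x t] unfolding e4 eb2 k0 li_nat p J1_def .
    have c1: "of_int ((n - m + 1) * (n - m + 2)) = (real k + 1) * (real k + 2)" using k by simp
    have c2: "of_int ((n + m + int CARD('d) - 2) * (n - m + 1)) = (real k + (\<alpha> - 4) + 2) * (real k + 1)"
    proof -
      have "n + m + int CARD('d) - 2 = int k + 2 * m + int CARD('d) - 2" using k by simp
      then show ?thesis using k by (simp add: \<alpha>_def D_def algebra_simps)
    qed
    have c3: "of_int ((n + m + int CARD('d) - 2) * (n + m + int CARD('d) - 3)) = (real k + (\<alpha> - 4) + 2) * (real k + (\<alpha> - 4) + 1)"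
    proof -
      have "n + m + int CARD('d) - 2 = int k + 2 * m + int CARD('d) - 2" using k by simp
      then show ?thesis using k by (simp add: \<alpha>_def D_def algebra_simps)
    qed
    have G2: "t^2 * L2 = (real k + (\<alpha> - 4) + 2) * (real k + (\<alpha> - 4) + 1) * laguerre k (\<alpha> - 4) t
       - 2 * (real k + 1) * (real k + (\<alpha> - 4) + 2) * laguerre (Suc k) (\<alpha> - 4) t
       + (real k + 1) * (real k + 2) * laguerre (Suc (Suc k)) (\<alpha> - 4) t"
    proof -
      have "\<alpha> - 2 = (\<alpha> - 4) + 2" by simp
      then have "L2 = laguerre k ((\<alpha> - 4) + 2) t" unfolding L2_def k li_nat by simp
      then show ?thesis using lag_2[of t k "\<alpha> - 4"] by simp
    qed
    define A where "A = real (Suc p) + \<beta>"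
    have JJ: "(real (Suc p) + A) * Jm = A * (J0 - t^2 * J1)"
      unfolding Jm_def J0_def J1_def p using hj_id[OF A_def] .
    have jp: "of_int j = real (Suc p)" using p(1) assms(3) by (metis of_int_of_nat_eq nat_0_le)
    have mpos: "m \<ge> 2" using False assms by auto
    have den: "2 * of_int m + real CARD('d) - 2 > 0" using mpos by simp
    have a: "coef_a CARD('d) m j = A / (real (Suc p) + A)"
    proof -
      have "\<not> (CARD('d) = 2 \<and> m = 0)" using mpos by auto
      then have "coef_a CARD('d) m j = (2 * of_int m - 2 * of_int j + real CARD('d) - 2) / (2 * of_int m + real CARD('d) - 2)"
        by (simp add: coef_a_def)
      also have "\<dots> = A / (real (Suc p) + A)"
        unfolding A_def \<beta>_def D_def jp[symmetric] using den by (simp add: divide_simps algebra_simps)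
      finally show ?thesis .
    qed
    have pos: "real (Suc p) + A > 0" using den unfolding A_def \<beta>_def D_def jp[symmetric] by (simp add: field_simps)
    have JJ': "Jm = A / (real (Suc p) + A) * (J0 - t^2 * J1)"
      using JJ pos by (simp add: field_simps)
    have "coef_a CARD('d) m j *
      ((Qpoly 0 n m j Y x t - of_int ((n - m + 1) * (n - m + 2)) * Qpoly 0 n (m - 2) (j - 1) Y x t)
       - 2 * (Qpoly 0 (n - 1) m j Y x t
              - of_int ((n + m + int CARD('d) - 2) * (n - m + 1)) * Qpoly 0 (n - 1) (m - 2) (j - 1) Y x t)
       + (Qpoly 0 (n - 2) m j Y x t
              - of_int ((n + m + int CARD('d) - 2) * (n + m + int CARD('d) - 3)) * Qpoly 0 (n - 2) (m - 2) (j - 1) Y x t))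
      = A / (real (Suc p) + A) * ((li (n - m) \<alpha> t - 2 * li (n - m - 1) \<alpha> t + li (n - m - 2) \<alpha> t) * J0 * Y x
          - ((real k + (\<alpha> - 4) + 2) * (real k + (\<alpha> - 4) + 1) * laguerre k (\<alpha> - 4) t
       - 2 * (real k + 1) * (real k + (\<alpha> - 4) + 2) * laguerre (Suc k) (\<alpha> - 4) t
       + (real k + 1) * (real k + 2) * laguerre (Suc (Suc k)) (\<alpha> - 4) t) * J1 * Y x)"
      unfolding a Q0 Q1 Q2 R0 R1 R2 c1 c2 c3 by (simp add: algebra_simps)
    also have "\<dots> = L2 * Jm * Y x"
      unfolding G1 G2[symmetric] JJ' by (simp add: algebra_simps)
    finally show ?thesis unfolding LHS by simp
  qed
qed

end
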